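(* Let $\mathbf{C}$ be a category of $\mathbf{FI}$ type and $c_1,c_2$ objects. There is a natural isomorphism of functors $\mathbf{C}\to\mathbf{Set}$ $$\mathrm{Hom}(c_1,\bullet)\times\mathrm{Hom}(c_2,\bullet)\;\cong\;\coprod_{[d]}\mathrm{Hom}(d,\bullet)\times_{G_d}\mathrm{PO}_d(c_1,c_2),$$ where $[d]$ ranges over isomorphism classes of objects and $d$ is a chosen representative of $[d]$, and this isomorphism respects the right actions of $G_{c_1}\times G_{c_2}$ by precomposition on both sides.
   Context: A category $\mathbf{C}$ is of $\mathbf{FI}$ type if: (1) all Hom-sets are finite; (2) every morphism is a monomorphism and every endomorphism is an isomorphism; (3) for all objects $c,d$ the group $G_d=\mathrm{Aut}_{\mathbf{C}}(d)$ acts transitively on $\mathrm{Hom}_{\mathbf{C}}(c,d)$; (4) for every $d$ only finitely many isomorphism classes of $c$ have $\mathrm{Hom}(c,d)\neq\emptyset$; (5) every pair $c_1\to d\leftarrow c_2$ has a pullback, and every pair $f_i:p\to c_i$ has a weak push-out, i.e. a commutative square $g_i:c_i\to d$ ($g_1f_1=g_2f_2$) which is a pullback square and such that for every other pullback square $h_i:c_i\to z$ with $h_1f_1=h_2f_2$ there is a unique $h:d\to z$ with $hg_i=h_i$. The push-out set $\mathrm{PO}_d(c_1,c_2)$ is the set of pairs of morphisms $(g_1:c_1\to d,\ g_2:c_2\to d)$ such that the pullback square of $g_1,g_2$ (with corner $c_1\times_d c_2$) is a weak push-out square. $G_d$ acts on it on the left by postcomposition, and $G_{c_1}\times G_{c_2}$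 on the right by precomposition. $\mathrm{Hom}(d,x)\times_{G_d}\mathrm{PO}_d(c_1,c_2)$ is the quotient of the product by $(f\circ g,(r_1,r_2))\sim(f,(g\circ r_1,g\circ r_2))$ for $g\in G_d$. *)

theory Defs
  imports Main
begin

text \<open>A (small) category given by a set of objects, hom-sets, composition and identities.
  cmp C g f denotes the composite g after f.\<close>
record ('o, 'm) category =
  obj :: "'o set"
  hom :: "'o \<Rightarrow> 'o \<Rightarrow> 'm set"
  cmp :: "'m \<Rightarrow> 'm \<Rightarrow> 'm"
  idm :: "'o \<Rightarrow> 'm"

definition is_category :: "('o, 'm, 'x) category_scheme \<Rightarrow> bool" where
  "is_category C \<longleftrightarrow>
     (\<forall>a\<in>obj C. idm C a \<in> hom C a a) \<and>
     (\<forall>a\<in>obj C. \<forall>b\<in>obj C. \<forall>c\<in>obj C. \<forall>f\<in>hom C a b. \<forall>g\<in>hom C b c.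
         cmp C g f \<in> hom C a c) \<and>
     (\<forall>a\<in>obj C. \<forall>b\<in>obj C. \<forall>c\<in>obj C. \<forall>d\<in>obj C.
        \<forall>f\<in>hom C a b. \<forall>g\<in>hom C b c. \<forall>h\<in>hom C c d.
         cmp C h (cmp C g f) = cmp C (cmp C h g) f) \<and>
     (\<forall>a\<in>obj C. \<forall>b\<in>obj C. \<forall>f\<in>hom C a b.
         cmp C f (idm C a) = f \<and> cmp C (idm C b) f = f) \<and>
     (\<forall>a b. (a \<notin> obj C \<or> b \<notin> obj C) \<longrightarrow> hom C a b = {}) \<and>
     (\<forall>a b a' b'. (a, b) \<noteq> (a', b') \<longrightarrow> hom C a b \<inter> hom C a' b' = {})"

definition is_iso :: "('o, 'm, 'x) category_scheme \<Rightarrow> 'o \<Rightarrow> 'o \<Rightarrow> 'm \<Rightarrow> bool" where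
  "is_iso C a b f \<longleftrightarrow> f \<in> hom C a b \<and>
     (\<exists>g\<in>hom C b a. cmp C g f = idm C a \<and> cmp C f g = idm C b)"

definition iso_objs :: "('o, 'm, 'x) category_scheme \<Rightarrow> 'o \<Rightarrow> 'o \<Rightarrow> bool" where
  "iso_objs C a b \<longleftrightarrow> (\<exists>f. is_iso C a b f)"

definition Aut :: "('o, 'm, 'x) category_scheme \<Rightarrow> 'o \<Rightarrow> 'm set" where
  "Aut C d = {g. is_iso C d d g}"

definition iso_class :: "('o, 'm, 'x) category_scheme \<Rightarrow> 'o \<Rightarrow> 'o set" where
  "iso_class C c = {c' \<in> obj C. iso_objs C c c'}"

definition is_pullback ::
  "('o, 'm, 'x) category_scheme \<Rightarrow> 'o \<Rightarrow> 'o \<Rightarrow> 'o \<Rightarrow> 'o \<Rightarrow> 'm \<Rightarrow> 'm \<Rightarrow> 'm \<Rightarrow> 'm \<Rightarrow> bool" where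
  "is_pullback C p c1 c2 d f1 f2 g1 g2 \<longleftrightarrow>
     p \<in> obj C \<and> c1 \<in> obj C \<and> c2 \<in> obj C \<and> d \<in> obj C \<and>
     f1 \<in> hom C p c1 \<and> f2 \<in> hom C p c2 \<and> g1 \<in> hom C c1 d \<and> g2 \<in> hom C c2 d \<and>
     cmp C g1 f1 = cmp C g2 f2 \<and>
     (\<forall>q\<in>obj C. \<forall>u1\<in>hom C q c1. \<forall>u2\<in>hom C q c2. cmp C g1 u1 = cmp C g2 u2 \<longrightarrow>
        (\<exists>!u. u \<in> hom C q p \<and> cmp C f1 u = u1 \<and> cmp C f2 u = u2))"

definition is_weak_pushout ::
  "('o, 'm, 'x) category_scheme \<Rightarrow> 'o \<Rightarrow> 'o \<Rightarrow> 'o \<Rightarrow> 'o \<Rightarrow> 'm \<Rightarrow> 'm \<Rightarrow> 'm \<Rightarrow> 'm \<Rightarrow> bool" where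
  "is_weak_pushout C p c1 c2 d f1 f2 g1 g2 \<longleftrightarrow>
     is_pullback C p c1 c2 d f1 f2 g1 g2 \<and>
     (\<forall>z\<in>obj C. \<forall>h1\<in>hom C c1 z. \<forall>h2\<in>hom C c2 z.
        is_pullback C p c1 c2 z f1 f2 h1 h2 \<longrightarrow>
        (\<exists>!h. h \<in> hom C d z \<and> cmp C h g1 = h1 \<and> cmp C h g2 = h2))"

definition FI_type :: "('o, 'm, 'x) category_scheme \<Rightarrow> bool" where
  "FI_type C \<longleftrightarrow> is_category C \<and>
     \<comment> \<open>(1) finite hom-sets\<close>
     (\<forall>c\<in>obj C. \<forall>d\<in>obj C. finite (hom C c d)) \<and>
     \<comment> \<open>(2) every morphism is a monomorphism, every endomorphism an isomorphism\<close>
     (\<forall>b\<in>obj C. \<forall>c\<in>obj C. \<forall>d\<in>obj C. \<forall>f\<in>hom C c d. \<forall>g\<in>hom C b c. \<forall>h\<in>hom C b c.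
         cmp C f g = cmp C f h \<longrightarrow> g = h) \<and>
     (\<forall>d\<in>obj C. \<forall>f\<in>hom C d d. is_iso C d d f) \<and>
     \<comment> \<open>(3) G_d acts transitively on Hom(c,d)\<close>
     (\<forall>c\<in>obj C. \<forall>d\<in>obj C. \<forall>f\<in>hom C c d. \<forall>f'\<in>hom C c d. \<exists>g\<in>Aut C d. cmp C g f = f') \<and>
     \<comment> \<open>(4) finitely many isomorphism classes map to each object\<close>
     (\<forall>d\<in>obj C. finite (iso_class C ` {c \<in> obj C. hom C c d \<noteq> {}})) \<and>
     \<comment> \<open>(5) pullbacks\<close>
     (\<forall>c1\<in>obj C. \<forall>c2\<in>obj C. \<forall>d\<in>obj C. \<forall>g1\<in>hom C c1 d. \<forall>g2\<in>hom C c2 d.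
         \<exists>p f1 f2. is_pullback C p c1 c2 d f1 f2 g1 g2) \<and>
     \<comment> \<open>(5) weak push-outs\<close>
     (\<forall>p\<in>obj C. \<forall>c1\<in>obj C. \<forall>c2\<in>obj C. \<forall>f1\<in>hom C p c1. \<forall>f2\<in>hom C p c2.
         \<exists>d g1 g2. is_weak_pushout C p c1 c2 d f1 f2 g1 g2)"

definition PO :: "('o, 'm, 'x) category_scheme \<Rightarrow> 'o \<Rightarrow> 'o \<Rightarrow> 'o \<Rightarrow> ('m \<times> 'm) set" where
  "PO C d c1 c2 = {(g1, g2). g1 \<in> hom C c1 d \<and> g2 \<in> hom C c2 d \<and>
      (\<exists>p f1 f2. is_pullback C p c1 c2 d f1 f2 g1 g2 \<and>
                 is_weak_pushout C p c1 c2 d f1 f2 g1 g2)}"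

text \<open>The relation defining Hom(d,x) \<times>_{G_d} PO_d(c1,c2):
  (f g, (r1, r2)) ~ (f, (g r1, g r2)) for g in G_d.\<close>
definition bal_rel :: "('o, 'm, 'x) category_scheme \<Rightarrow> 'o \<Rightarrow> 'o \<Rightarrow> 'o \<Rightarrow> 'o \<Rightarrow>
    (('m \<times> ('m \<times> 'm)) \<times> ('m \<times> ('m \<times> 'm))) set" where
  "bal_rel C d x c1 c2 = {((h, (r1, r2)), (h', (r1', r2'))).
      (h, (r1, r2)) \<in> hom C d x \<times> PO C d c1 c2 \<and> (h', (r1', r2')) \<in> hom C d x \<times> PO C d c1 c2 \<and>
      (\<exists>g\<in>Aut C d. h = cmp C h' g \<and> r1' = cmp C g r1 \<and> r2' = cmp C g r2)}"

definition balanced_prod :: "('o, 'm, 'x) category_scheme \<Rightarrow> 'o \<Rightarrow> 'o \<Rightarrow> 'o \<Rightarrow> 'o \<Rightarrow>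
    ('m \<times> ('m \<times> 'm)) set set" where
  "balanced_prod C d x c1 c2 = (hom C d x \<times> PO C d c1 c2) // bal_rel C d x c1 c2"

definition bal_class :: "('o, 'm, 'x) category_scheme \<Rightarrow> 'o \<Rightarrow> 'o \<Rightarrow> 'o \<Rightarrow> 'o \<Rightarrow>
    'm \<times> ('m \<times> 'm) \<Rightarrow> ('m \<times> ('m \<times> 'm)) set" where
  "bal_class C d x c1 c2 a = bal_rel C d x c1 c2 `` {a}"

definition rep_system :: "('o, 'm, 'x) category_scheme \<Rightarrow> 'o set \<Rightarrow> bool" where
  "rep_system C R \<longleftrightarrow> R \<subseteq> obj C \<and>
     (\<forall>c\<in>obj C. \<exists>d\<in>R. iso_objs C c d) \<and>
     (\<forall>d\<in>R. \<forall>d'\<in>R. iso_objs C d d' \<longrightarrow> d = d')"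

definition coprod_PO :: "('o, 'm, 'x) category_scheme \<Rightarrow> 'o set \<Rightarrow> 'o \<Rightarrow> 'o \<Rightarrow> 'o \<Rightarrow>
    ('o \<times> ('m \<times> ('m \<times> 'm)) set) set" where
  "coprod_PO C R c1 c2 x = (SIGMA d:R. balanced_prod C d x c1 c2)"

end

theory Submission
  imports Defs
begin

locale fi =
  fixes C :: "('o, 'm) category"
  assumes FI: "FI_type C"
begin

lemma cat: "is_category C" using FI unfolding FI_type_def by blast

lemma catD:
  "\<forall>a\<in>obj C. idm C a \<in> hom C a a"
  "\<forall>a\<in>obj C. \<forall>b\<in>obj C. \<forall>c\<in>obj C. \<forall>f\<in>hom C a b. \<forall>g\<in>hom C b c. cmp C g f \<in> hom C a c"
  "\<forall>a\<in>obj C. \<forall>b\<in>obj C. \<forall>c\<in>obj C. \<forall>d\<in>obj C.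
        \<forall>f\<in>hom C a b. \<forall>g\<in>hom C b c. \<forall>h\<in>hom C c d.
         cmp C h (cmp C g f) = cmp C (cmp C h g) f"
  "\<forall>a\<in>obj C. \<forall>b\<in>obj C. \<forall>f\<in>hom C a b. cmp C f (idm C a) = f \<and> cmp C (idm C b) f = f"
  "\<forall>a b. (a \<notin> obj C \<or> b \<notin> obj C) \<longrightarrow> hom C a b = {}"
  using cat unfolding is_category_def apply - apply (elim conjE, assumption)+ done

lemma hom_objs: "f \<in> hom C a b \<Longrightarrow> a \<in> obj C \<and> b \<in> obj C"
  using catD(5) by blast

lemma comp_in: "f \<in> hom C a b \<Longrightarrow> g \<in> hom C b c \<Longrightarrow> cmp C g f \<in> hom C a c"
proof -
  assume f: "f \<in> hom C a b" and g: "g \<in> hom C b c"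
  have o: "a \<in> obj C" "b \<in> obj C" "c \<in> obj C" using hom_objs f g by blast+
  show ?thesis using catD(2) o f g by blast
qed

lemma assoc: "f \<in> hom C a b \<Longrightarrow> g \<in> hom C b c \<Longrightarrow> h \<in> hom C c d \<Longrightarrow>
   cmp C h (cmp C g f) = cmp C (cmp C h g) f"
proof -
  assume f: "f \<in> hom C a b" and g: "g \<in> hom C b c" and h: "h \<in> hom C c d"
  have o: "a \<in> obj C" "b \<in> obj C" "c \<in> obj C" "d \<in> obj C" using hom_objs f g h by blast+
  show ?thesis using catD(3) o f g h by blast
qed

lemma idl: "f \<in> hom C a b \<Longrightarrow> cmp C (idm C b) f = f"
  using catD(4) hom_objs by blast

lemma idr: "f \<in> hom C a b \<Longrightarrow> cmp C f (idm C a) = f"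
  using catD(4) hom_objs by blast

lemma id_in: "a \<in> obj C \<Longrightarrow> idm C a \<in> hom C a a"
  using catD(1) by blast

lemma FID:
  "\<forall>b\<in>obj C. \<forall>c\<in>obj C. \<forall>d\<in>obj C. \<forall>f\<in>hom C c d. \<forall>g\<in>hom C b c. \<forall>h\<in>hom C b c.
         cmp C f g = cmp C f h \<longrightarrow> g = h"
  "\<forall>c1\<in>obj C. \<forall>c2\<in>obj C. \<forall>d\<in>obj C. \<forall>g1\<in>hom C c1 d. \<forall>g2\<in>hom C c2 d.
         \<exists>p f1 f2. is_pullback C p c1 c2 d f1 f2 g1 g2"
  "\<forall>p\<in>obj C. \<forall>c1\<in>obj C. \<forall>c2\<in>obj C. \<forall>f1\<in>hom C p c1. \<forall>f2\<in>hom C p c2.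
         \<exists>d g1 g2. is_weak_pushout C p c1 c2 d f1 f2 g1 g2"
  using FI unfolding FI_type_def apply - apply (elim conjE, assumption)+ done

lemma mono: "f \<in> hom C c d \<Longrightarrow> g \<in> hom C b c \<Longrightarrow> h \<in> hom C b c \<Longrightarrow> cmp C f g = cmp C f h \<Longrightarrow> g = h"
proof -
  assume f: "f \<in> hom C c d" and g: "g \<in> hom C b c" and h: "h \<in> hom C b c" and e: "cmp C f g = cmp C f h"
  have o: "b \<in> obj C" "c \<in> obj C" "d \<in> obj C" using hom_objs f g by blast+
  show ?thesis using FID(1) o f g h e by blast
qed

lemma pb_exists: "g1 \<in> hom C c1 d \<Longrightarrow> g2 \<in> hom C c2 d \<Longrightarrow> \<exists>p f1 f2. is_pullback C p c1 c2 d f1 f2 g1 g2"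
proof -
  assume a: "g1 \<in> hom C c1 d" "g2 \<in> hom C c2 d"
  have o: "c1 \<in> obj C" "c2 \<in> obj C" "d \<in> obj C" using hom_objs a by blast+
  show ?thesis using FID(2) o a by blast
qed

lemma wpo_exists: "f1 \<in> hom C p c1 \<Longrightarrow> f2 \<in> hom C p c2 \<Longrightarrow> \<exists>d g1 g2. is_weak_pushout C p c1 c2 d f1 f2 g1 g2"
proof -
  assume a: "f1 \<in> hom C p c1" "f2 \<in> hom C p c2"
  have o: "c1 \<in> obj C" "c2 \<in> obj C" "p \<in> obj C" using hom_objs a by blast+
  show ?thesis using FID(3) o a by blast
qed

lemma pb_post:
  assumes pb: "is_pullback C p c1 c2 d f1 f2 g1 g2" and phi: "\<phi> \<in> hom C d d'"
  shows "is_pullback C p c1 c2 d' f1 f2 (cmp C \<phi> g1) (cmp C \<phi> g2)"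
proof -
  from pb have o: "p \<in> obj C" "c1 \<in> obj C" "c2 \<in> obj C" "d \<in> obj C"
    and m: "f1 \<in> hom C p c1" "f2 \<in> hom C p c2" "g1 \<in> hom C c1 d" "g2 \<in> hom C c2 d"
    and comm: "cmp C g1 f1 = cmp C g2 f2"
    and U: "\<forall>q\<in>obj C. \<forall>u1\<in>hom C q c1. \<forall>u2\<in>hom C q c2. cmp C g1 u1 = cmp C g2 u2 \<longrightarrow>
        (\<exists>!u. u \<in> hom C q p \<and> cmp C f1 u = u1 \<and> cmp C f2 u = u2)"
    unfolding is_pullback_def by auto
  have d': "d' \<in> obj C" using phi hom_objs by blast
  have comm': "cmp C (cmp C \<phi> g1) f1 = cmp C (cmp C \<phi> g2) f2"
    using assoc[OF m(1) m(3) phi] assoc[OF m(2) m(4) phi] comm by simp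
  have U': "\<forall>q\<in>obj C. \<forall>u1\<in>hom C q c1. \<forall>u2\<in>hom C q c2. cmp C (cmp C \<phi> g1) u1 = cmp C (cmp C \<phi> g2) u2 \<longrightarrow>
        (\<exists>!u. u \<in> hom C q p \<and> cmp C f1 u = u1 \<and> cmp C f2 u = u2)"
  proof (intro ballI impI)
    fix q u1 u2 assume q: "q \<in> obj C" and u: "u1 \<in> hom C q c1" "u2 \<in> hom C q c2"
      and e: "cmp C (cmp C \<phi> g1) u1 = cmp C (cmp C \<phi> g2) u2"
    have "cmp C \<phi> (cmp C g1 u1) = cmp C \<phi> (cmp C g2 u2)"
      using assoc[OF u(1) m(3) phi] assoc[OF u(2) m(4) phi] e by simp
    hence "cmp C g1 u1 = cmp C g2 u2"
      using mono[OF phi comp_in[OF u(1) m(3)] comp_in[OF u(2) m(4)]] by blast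
    thus "\<exists>!u. u \<in> hom C q p \<and> cmp C f1 u = u1 \<and> cmp C f2 u = u2" using U q u by blast
  qed
  show ?thesis unfolding is_pullback_def
    using o d' m comp_in[OF m(3) phi] comp_in[OF m(4) phi] comm' U' by blast
qed

lemma pb_cancel:
  assumes pb: "is_pullback C p c1 c2 d' f1 f2 a1 a2" and phi: "\<phi> \<in> hom C d d'"
    and g: "g1 \<in> hom C c1 d" "g2 \<in> hom C c2 d"
    and a: "a1 = cmp C \<phi> g1" "a2 = cmp C \<phi> g2"
    and comm: "cmp C g1 f1 = cmp C g2 f2"
  shows "is_pullback C p c1 c2 d f1 f2 g1 g2"
proof -
  from pb have o: "p \<in> obj C" "c1 \<in> obj C" "c2 \<in> obj C"
    and m: "f1 \<in> hom C p c1" "f2 \<in> hom C p c2"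
    and U: "\<forall>q\<in>obj C. \<forall>u1\<in>hom C q c1. \<forall>u2\<in>hom C q c2. cmp C a1 u1 = cmp C a2 u2 \<longrightarrow>
        (\<exists>!u. u \<in> hom C q p \<and> cmp C f1 u = u1 \<and> cmp C f2 u = u2)"
    unfolding is_pullback_def by auto
  have d: "d \<in> obj C" using phi hom_objs by blast
  have U': "\<forall>q\<in>obj C. \<forall>u1\<in>hom C q c1. \<forall>u2\<in>hom C q c2. cmp C g1 u1 = cmp C g2 u2 \<longrightarrow>
        (\<exists>!u. u \<in> hom C q p \<and> cmp C f1 u = u1 \<and> cmp C f2 u = u2)"
  proof (intro ballI impI)
    fix q u1 u2 assume q: "q \<in> obj C" and u: "u1 \<in> hom C q c1" "u2 \<in> hom C q c2"
      and e: "cmp C g1 u1 = cmp C g2 u2"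
    have "cmp C a1 u1 = cmp C a2 u2"
      using assoc[OF u(1) g(1) phi] assoc[OF u(2) g(2) phi] e a by simp
    thus "\<exists>!u. u \<in> hom C q p \<and> cmp C f1 u = u1 \<and> cmp C f2 u = u2" using U q u by blast
  qed
  show ?thesis unfolding is_pullback_def using o d m g comm U' by blast
qed

lemma pb_pre:
  assumes pb: "is_pullback C p c1 c2 d f1 f2 g1 g2"
    and s: "s1 \<in> hom C c1 e1" "t1 \<in> hom C e1 c1" "cmp C t1 s1 = idm C c1" "cmp C s1 t1 = idm C e1"
      "s2 \<in> hom C c2 e2" "t2 \<in> hom C e2 c2" "cmp C t2 s2 = idm C c2" "cmp C s2 t2 = idm C e2"
  shows "is_pullback C p e1 e2 d (cmp C s1 f1) (cmp C s2 f2) (cmp C g1 t1) (cmp C g2 t2)"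
proof -
  from pb have o: "p \<in> obj C" "d \<in> obj C"
    and m: "f1 \<in> hom C p c1" "f2 \<in> hom C p c2" "g1 \<in> hom C c1 d" "g2 \<in> hom C c2 d"
    and comm: "cmp C g1 f1 = cmp C g2 f2"
    and U: "\<forall>q\<in>obj C. \<forall>u1\<in>hom C q c1. \<forall>u2\<in>hom C q c2. cmp C g1 u1 = cmp C g2 u2 \<longrightarrow>
        (\<exists>!u. u \<in> hom C q p \<and> cmp C f1 u = u1 \<and> cmp C f2 u = u2)"
    unfolding is_pullback_def by auto
  have e: "e1 \<in> obj C" "e2 \<in> obj C" using hom_objs s by blast+
  have k1: "cmp C (cmp C g1 t1) (cmp C s1 f1) = cmp C g1 f1"
  proof -
    have "cmp C (cmp C g1 t1) (cmp C s1 f1) = cmp C g1 (cmp C t1 (cmp C s1 f1))"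
      using assoc[OF comp_in[OF m(1) s(1)] s(2) m(3)] by simp
    also have "\<dots> = cmp C g1 (cmp C (cmp C t1 s1) f1)" using assoc[OF m(1) s(1) s(2)] by simp
    also have "\<dots> = cmp C g1 f1" using s(3) idl[OF m(1)] by simp
    finally show ?thesis .
  qed
  have k2: "cmp C (cmp C g2 t2) (cmp C s2 f2) = cmp C g2 f2"
  proof -
    have "cmp C (cmp C g2 t2) (cmp C s2 f2) = cmp C g2 (cmp C t2 (cmp C s2 f2))"
      using assoc[OF comp_in[OF m(2) s(5)] s(6) m(4)] by simp
    also have "\<dots> = cmp C g2 (cmp C (cmp C t2 s2) f2)" using assoc[OF m(2) s(5) s(6)] by simp
    also have "\<dots> = cmp C g2 f2" using s(7) idl[OF m(2)] by simp
    finally show ?thesis .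
  qed
  have U': "\<forall>q\<in>obj C. \<forall>u1\<in>hom C q e1. \<forall>u2\<in>hom C q e2. cmp C (cmp C g1 t1) u1 = cmp C (cmp C g2 t2) u2 \<longrightarrow>
        (\<exists>!u. u \<in> hom C q p \<and> cmp C (cmp C s1 f1) u = u1 \<and> cmp C (cmp C s2 f2) u = u2)"
  proof (intro ballI impI)
    fix q u1 u2 assume q: "q \<in> obj C" and u: "u1 \<in> hom C q e1" "u2 \<in> hom C q e2"
      and ee: "cmp C (cmp C g1 t1) u1 = cmp C (cmp C g2 t2) u2"
    have tu: "cmp C t1 u1 \<in> hom C q c1" "cmp C t2 u2 \<in> hom C q c2"
      using comp_in u s by blast+
    have "cmp C g1 (cmp C t1 u1) = cmp C g2 (cmp C t2 u2)"
      using assoc[OF u(1) s(2) m(3)] assoc[OF u(2) s(6) m(4)] ee by simp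
    hence ex: "\<exists>!w. w \<in> hom C q p \<and> cmp C f1 w = cmp C t1 u1 \<and> cmp C f2 w = cmp C t2 u2"
      using U q tu by blast
    have iff1: "cmp C (cmp C s1 f1) w = u1 \<longleftrightarrow> cmp C f1 w = cmp C t1 u1" if w: "w \<in> hom C q p" for w
    proof
      assume h: "cmp C (cmp C s1 f1) w = u1"
      have "cmp C t1 u1 = cmp C (cmp C t1 s1) (cmp C f1 w)"
        using h assoc[OF w m(1) s(1)] assoc[OF comp_in[OF w m(1)] s(1) s(2)] by simp
      thus "cmp C f1 w = cmp C t1 u1" using s(3) idl[OF comp_in[OF w m(1)]] by simp
    next
      assume h: "cmp C f1 w = cmp C t1 u1"
      have "cmp C (cmp C s1 f1) w = cmp C s1 (cmp C t1 u1)" using h assoc[OF w m(1) s(1)] by simp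
      also have "\<dots> = u1" using assoc[OF u(1) s(2) s(1)] s(4) idl[OF u(1)] by simp
      finally show "cmp C (cmp C s1 f1) w = u1" .
    qed
    have iff2: "cmp C (cmp C s2 f2) w = u2 \<longleftrightarrow> cmp C f2 w = cmp C t2 u2" if w: "w \<in> hom C q p" for w
    proof
      assume h: "cmp C (cmp C s2 f2) w = u2"
      have "cmp C t2 u2 = cmp C (cmp C t2 s2) (cmp C f2 w)"
        using h assoc[OF w m(2) s(5)] assoc[OF comp_in[OF w m(2)] s(5) s(6)] by simp
      thus "cmp C f2 w = cmp C t2 u2" using s(7) idl[OF comp_in[OF w m(2)]] by simp
    next
      assume h: "cmp C f2 w = cmp C t2 u2"
      have "cmp C (cmp C s2 f2) w = cmp C s2 (cmp C t2 u2)" using h assoc[OF w m(2) s(5)] by simp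
      also have "\<dots> = u2" using assoc[OF u(2) s(6) s(5)] s(8) idl[OF u(2)] by simp
      finally show "cmp C (cmp C s2 f2) w = u2" .
    qed
    show "\<exists>!u. u \<in> hom C q p \<and> cmp C (cmp C s1 f1) u = u1 \<and> cmp C (cmp C s2 f2) u = u2"
      using ex iff1 iff2 by blast
  qed
  show ?thesis unfolding is_pullback_def
    using o e comp_in[OF m(1) s(1)] comp_in[OF m(2) s(5)] comp_in[OF s(2) m(3)] comp_in[OF s(6) m(4)]
      k1 k2 comm U' by auto
qed

lemma pbD:
  assumes "is_pullback C p c1 c2 d f1 f2 g1 g2"
  shows "p \<in> obj C" "c1 \<in> obj C" "c2 \<in> obj C" "d \<in> obj C"
    "f1 \<in> hom C p c1" "f2 \<in> hom C p c2" "g1 \<in> hom C c1 d" "g2 \<in> hom C c2 d"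
    "cmp C g1 f1 = cmp C g2 f2"
  using assms unfolding is_pullback_def by blast+

lemma wpoD:
  assumes "is_weak_pushout C p c1 c2 d f1 f2 g1 g2"
  shows "is_pullback C p c1 c2 d f1 f2 g1 g2"
    "\<And>z h1 h2. z \<in> obj C \<Longrightarrow> h1 \<in> hom C c1 z \<Longrightarrow> h2 \<in> hom C c2 z \<Longrightarrow>
        is_pullback C p c1 c2 z f1 f2 h1 h2 \<Longrightarrow>
        (\<exists>!h. h \<in> hom C d z \<and> cmp C h g1 = h1 \<and> cmp C h g2 = h2)"
  using assms unfolding is_weak_pushout_def by blast+

lemma wpo_post:
  assumes wpo: "is_weak_pushout C p c1 c2 d f1 f2 g1 g2"
    and phi: "\<phi> \<in> hom C d d'" and psi: "\<psi> \<in> hom C d' d"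
    and i1: "cmp C \<psi> \<phi> = idm C d" and i2: "cmp C \<phi> \<psi> = idm C d'"
  shows "is_weak_pushout C p c1 c2 d' f1 f2 (cmp C \<phi> g1) (cmp C \<phi> g2)"
proof -
  have pb: "is_pullback C p c1 c2 d f1 f2 g1 g2" using wpoD(1)[OF wpo] .
  note m = pbD[OF pb]
  have U': "\<exists>!h. h \<in> hom C d' z \<and> cmp C h (cmp C \<phi> g1) = h1 \<and> cmp C h (cmp C \<phi> g2) = h2"
    if z: "z \<in> obj C" and h: "h1 \<in> hom C c1 z" "h2 \<in> hom C c2 z"
      and pbz: "is_pullback C p c1 c2 z f1 f2 h1 h2" for z h1 h2
  proof -
    obtain k where k: "k \<in> hom C d z" "cmp C k g1 = h1" "cmp C k g2 = h2"
      and ku: "\<And>k'. k' \<in> hom C d z \<Longrightarrow> cmp C k' g1 = h1 \<Longrightarrow> cmp C k' g2 = h2 \<Longrightarrow> k' = k"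
      using wpoD(2)[OF wpo z h pbz] by blast
    have kp: "cmp C k \<psi> \<in> hom C d' z" using comp_in[OF psi k(1)] .
    have e1: "cmp C (cmp C k \<psi>) (cmp C \<phi> g1) = h1"
    proof -
      have "cmp C (cmp C k \<psi>) (cmp C \<phi> g1) = cmp C k (cmp C \<psi> (cmp C \<phi> g1))"
        using assoc[OF comp_in[OF m(7) phi] psi k(1)] by simp
      also have "\<dots> = cmp C k g1" using assoc[OF m(7) phi psi] i1 idl[OF m(7)] by simp
      finally show ?thesis using k(2) by simp
    qed
    have e2: "cmp C (cmp C k \<psi>) (cmp C \<phi> g2) = h2"
    proof -
      have "cmp C (cmp C k \<psi>) (cmp C \<phi> g2) = cmp C k (cmp C \<psi> (cmp C \<phi> g2))"
        using assoc[OF comp_in[OF m(8) phi] psi k(1)] by simp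
      also have "\<dots> = cmp C k g2" using assoc[OF m(8) phi psi] i1 idl[OF m(8)] by simp
      finally show ?thesis using k(3) by simp
    qed
    have uniq: "m' = cmp C k \<psi>" if m': "m' \<in> hom C d' z" "cmp C m' (cmp C \<phi> g1) = h1"
        "cmp C m' (cmp C \<phi> g2) = h2" for m'
    proof -
      have "cmp C m' \<phi> = k"
        using ku[OF comp_in[OF phi m'(1)]] assoc[OF m(7) phi m'(1)] assoc[OF m(8) phi m'(1)] m' by simp
      hence "cmp C k \<psi> = cmp C m' (cmp C \<phi> \<psi>)" using assoc[OF psi phi m'(1)] by simp
      thus ?thesis using i2 idr[OF m'(1)] by simp
    qed
    show ?thesis using kp e1 e2 uniq by blast
  qed
  show ?thesis unfolding is_weak_pushout_def using pb_post[OF pb phi] U' by blast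
qed

lemma wpo_pre:
  assumes wpo: "is_weak_pushout C p c1 c2 d f1 f2 r1 r2"
    and s: "s1 \<in> hom C c1 c1" "t1 \<in> hom C c1 c1" "cmp C t1 s1 = idm C c1" "cmp C s1 t1 = idm C c1"
      "s2 \<in> hom C c2 c2" "t2 \<in> hom C c2 c2" "cmp C t2 s2 = idm C c2" "cmp C s2 t2 = idm C c2"
  shows "is_weak_pushout C p c1 c2 d (cmp C t1 f1) (cmp C t2 f2) (cmp C r1 s1) (cmp C r2 s2)"
proof -
  have pb: "is_pullback C p c1 c2 d f1 f2 r1 r2" using wpoD(1)[OF wpo] .
  note m = pbD[OF pb]
  have pb2: "is_pullback C p c1 c2 d (cmp C t1 f1) (cmp C t2 f2) (cmp C r1 s1) (cmp C r2 s2)"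
    using pb_pre[OF pb s(2) s(1) s(4) s(3) s(6) s(5) s(8) s(7)] .
  have stf1: "cmp C s1 (cmp C t1 f1) = f1"
    using assoc[OF m(5) s(2) s(1)] s(4) idl[OF m(5)] by simp
  have stf2: "cmp C s2 (cmp C t2 f2) = f2"
    using assoc[OF m(6) s(6) s(5)] s(8) idl[OF m(6)] by simp
  have U': "\<exists>!h. h \<in> hom C d z \<and> cmp C h (cmp C r1 s1) = h1 \<and> cmp C h (cmp C r2 s2) = h2"
    if z: "z \<in> obj C" and h: "h1 \<in> hom C c1 z" "h2 \<in> hom C c2 z"
      and pbz: "is_pullback C p c1 c2 z (cmp C t1 f1) (cmp C t2 f2) h1 h2" for z h1 h2
  proof -
    have pbz2: "is_pullback C p c1 c2 z f1 f2 (cmp C h1 t1) (cmp C h2 t2)"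
      using pb_pre[OF pbz s] stf1 stf2 by simp
    have ex: "\<exists>!k. k \<in> hom C d z \<and> cmp C k r1 = cmp C h1 t1 \<and> cmp C k r2 = cmp C h2 t2"
      using wpoD(2)[OF wpo z comp_in[OF s(2) h(1)] comp_in[OF s(6) h(2)] pbz2] .
    have iff1: "cmp C k (cmp C r1 s1) = h1 \<longleftrightarrow> cmp C k r1 = cmp C h1 t1" if k: "k \<in> hom C d z" for k
    proof
      assume a: "cmp C k (cmp C r1 s1) = h1"
      have "cmp C h1 t1 = cmp C (cmp C k r1) (cmp C s1 t1)"
        using a assoc[OF s(1) m(7) k] assoc[OF s(2) s(1) comp_in[OF m(7) k]] by simp
      thus "cmp C k r1 = cmp C h1 t1" using s(4) idr[OF comp_in[OF m(7) k]] by simp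
    next
      assume a: "cmp C k r1 = cmp C h1 t1"
      have "cmp C k (cmp C r1 s1) = cmp C (cmp C h1 t1) s1" using a assoc[OF s(1) m(7) k] by simp
      also have "\<dots> = h1" using assoc[OF s(1) s(2) h(1)] s(3) idr[OF h(1)] by simp
      finally show "cmp C k (cmp C r1 s1) = h1" .
    qed
    have iff2: "cmp C k (cmp C r2 s2) = h2 \<longleftrightarrow> cmp C k r2 = cmp C h2 t2" if k: "k \<in> hom C d z" for k
    proof
      assume a: "cmp C k (cmp C r2 s2) = h2"
      have "cmp C h2 t2 = cmp C (cmp C k r2) (cmp C s2 t2)"
        using a assoc[OF s(5) m(8) k] assoc[OF s(6) s(5) comp_in[OF m(8) k]] by simp
      thus "cmp C k r2 = cmp C h2 t2" using s(8) idr[OF comp_in[OF m(8) k]] by simp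
    next
      assume a: "cmp C k r2 = cmp C h2 t2"
      have "cmp C k (cmp C r2 s2) = cmp C (cmp C h2 t2) s2" using a assoc[OF s(5) m(8) k] by simp
      also have "\<dots> = h2" using assoc[OF s(5) s(6) h(2)] s(7) idr[OF h(2)] by simp
      finally show "cmp C k (cmp C r2 s2) = h2" .
    qed
    show ?thesis using ex iff1 iff2 by blast
  qed
  show ?thesis unfolding is_weak_pushout_def using pb2 U' by blast
qed

lemma isoE:
  assumes "is_iso C a b f"
  obtains g where "f \<in> hom C a b" "g \<in> hom C b a" "cmp C g f = idm C a" "cmp C f g = idm C b"
  using assms unfolding is_iso_def by blast

lemma PO_iff: "(r1, r2) \<in> PO C d c1 c2 \<longleftrightarrow> r1 \<in> hom C c1 d \<and> r2 \<in> hom C c2 d \<and>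
    (\<exists>p f1 f2. is_weak_pushout C p c1 c2 d f1 f2 r1 r2)"
  unfolding PO_def is_weak_pushout_def by blast

lemma aut_hom: "g \<in> Aut C d \<Longrightarrow> g \<in> hom C d d"
  unfolding Aut_def is_iso_def by blast

lemma aut_inv: "g \<in> Aut C d \<Longrightarrow> \<exists>g'. g' \<in> Aut C d \<and> cmp C g' g = idm C d \<and> cmp C g g' = idm C d"
  unfolding Aut_def is_iso_def by blast

lemma aut_id: "d \<in> obj C \<Longrightarrow> idm C d \<in> Aut C d"
  unfolding Aut_def is_iso_def using id_in idl by blast

lemma aut_comp:
  assumes g: "g \<in> Aut C d" and k: "k \<in> Aut C d"
  shows "cmp C g k \<in> Aut C d"
proof -
  obtain g' where g': "g' \<in> Aut C d" "cmp C g' g = idm C d" "cmp C g g' = idm C d" using aut_inv[OF g] by blast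
  obtain k' where k': "k' \<in> Aut C d" "cmp C k' k = idm C d" "cmp C k k' = idm C d" using aut_inv[OF k] by blast
  note H = aut_hom[OF g] aut_hom[OF k] aut_hom[OF g'(1)] aut_hom[OF k'(1)]
  have "cmp C (cmp C k' g') (cmp C g k) = cmp C k' (cmp C (cmp C g' g) k)"
    using assoc[OF H(2) H(1) H(3)] assoc[OF comp_in[OF H(2) H(1)] H(3) H(4)] by simp
  also have "\<dots> = idm C d" using g'(2) idl[OF H(2)] k'(2) by simp
  finally have e1: "cmp C (cmp C k' g') (cmp C g k) = idm C d" .
  have "cmp C (cmp C g k) (cmp C k' g') = cmp C g (cmp C (cmp C k k') g')"
    using assoc[OF H(3) H(4) H(2)] assoc[OF comp_in[OF H(3) H(4)] H(2) H(1)] by simp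
  also have "\<dots> = idm C d" using k'(3) idl[OF H(3)] g'(3) by simp
  finally have e2: "cmp C (cmp C g k) (cmp C k' g') = idm C d" .
  show ?thesis unfolding Aut_def is_iso_def
    using comp_in[OF H(2) H(1)] comp_in[OF H(3) H(4)] e1 e2 by blast
qed

lemma bal_mem: "((h, (r1, r2)), (h', (r1', r2'))) \<in> bal_rel C d x c1 c2 \<longleftrightarrow>
   h \<in> hom C d x \<and> (r1, r2) \<in> PO C d c1 c2 \<and> h' \<in> hom C d x \<and> (r1', r2') \<in> PO C d c1 c2 \<and>
   (\<exists>g\<in>Aut C d. h = cmp C h' g \<and> r1' = cmp C g r1 \<and> r2' = cmp C g r2)"
  unfolding bal_rel_def by simp

lemma bal_comp:
  assumes "((h, (r1, r2)), (h', (r1', r2'))) \<in> bal_rel C d x c1 c2"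
  shows "cmp C h r1 = cmp C h' r1' \<and> cmp C h r2 = cmp C h' r2'"
proof -
  from assms obtain g where g: "g \<in> Aut C d" "h = cmp C h' g" "r1' = cmp C g r1" "r2' = cmp C g r2"
    and m: "h' \<in> hom C d x" "(r1, r2) \<in> PO C d c1 c2" unfolding bal_mem by blast
  have r: "r1 \<in> hom C c1 d" "r2 \<in> hom C c2 d" using m(2) unfolding PO_iff by blast+
  show ?thesis using g assoc[OF r(1) aut_hom[OF g(1)] m(1)] assoc[OF r(2) aut_hom[OF g(1)] m(1)] by simp
qed

lemma bal_equiv:
  assumes d: "d \<in> obj C"
  shows "equiv (hom C d x \<times> PO C d c1 c2) (bal_rel C d x c1 c2)"
proof (rule equivI)
  show "bal_rel C d x c1 c2 \<subseteq> (hom C d x \<times> PO C d c1 c2) \<times> (hom C d x \<times> PO C d c1 c2)"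
    unfolding bal_rel_def by blast
next
  show "refl_on (hom C d x \<times> PO C d c1 c2) (bal_rel C d x c1 c2)"
  proof (rule refl_onI)
    fix a assume a: "a \<in> hom C d x \<times> PO C d c1 c2"
    obtain h r1 r2 where ad: "a = (h, (r1, r2))" by (cases a) auto
    have m: "h \<in> hom C d x" "(r1, r2) \<in> PO C d c1 c2" using a ad by auto
    have r: "r1 \<in> hom C c1 d" "r2 \<in> hom C c2 d" using m(2) unfolding PO_iff by blast+
    have "((h, (r1, r2)), (h, (r1, r2))) \<in> bal_rel C d x c1 c2"
      unfolding bal_mem using m aut_id[OF d] idr[OF m(1)] idl[OF r(1)] idl[OF r(2)] by metis
    thus "(a, a) \<in> bal_rel C d x c1 c2" using ad by simp
  qed
next
  show "sym (bal_rel C d x c1 c2)"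
  proof (rule symI)
    fix a b assume ab: "(a, b) \<in> bal_rel C d x c1 c2"
    obtain h r1 r2 where ad: "a = (h, (r1, r2))" by (cases a) auto
    obtain h' r1' r2' where bd: "b = (h', (r1', r2'))" by (cases b) auto
    from ab[unfolded ad bd bal_mem] obtain g where
      m: "h \<in> hom C d x" "(r1, r2) \<in> PO C d c1 c2" "h' \<in> hom C d x" "(r1', r2') \<in> PO C d c1 c2"
      and g: "g \<in> Aut C d" "h = cmp C h' g" "r1' = cmp C g r1" "r2' = cmp C g r2" by blast
    have r: "r1 \<in> hom C c1 d" "r2 \<in> hom C c2 d" using m(2) unfolding PO_iff by blast+
    obtain g' where g': "g' \<in> Aut C d" "cmp C g' g = idm C d" "cmp C g g' = idm C d"
      using aut_inv[OF g(1)] by blast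
    note G = aut_hom[OF g(1)] aut_hom[OF g'(1)]
    have e1: "h' = cmp C h g'"
      using g(2) assoc[OF G(2) G(1) m(3)] g'(3) idr[OF m(3)] by simp
    have e2: "r1 = cmp C g' r1'"
      using g(3) assoc[OF r(1) G(1) G(2)] g'(2) idl[OF r(1)] by simp
    have e3: "r2 = cmp C g' r2'"
      using g(4) assoc[OF r(2) G(1) G(2)] g'(2) idl[OF r(2)] by simp
    have "((h', (r1', r2')), (h, (r1, r2))) \<in> bal_rel C d x c1 c2"
      unfolding bal_mem using m g'(1) e1 e2 e3 by blast
    thus "(b, a) \<in> bal_rel C d x c1 c2" using ad bd by simp
  qed
next
  show "trans (bal_rel C d x c1 c2)"
  proof (rule transI)
    fix a b c assume ab: "(a, b) \<in> bal_rel C d x c1 c2" and bc: "(b, c) \<in> bal_rel C d x c1 c2"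
    obtain h r1 r2 where ad: "a = (h, (r1, r2))" by (cases a) auto
    obtain h' r1' r2' where bd: "b = (h', (r1', r2'))" by (cases b) auto
    obtain h'' r1'' r2'' where cd: "c = (h'', (r1'', r2''))" by (cases c) auto
    from ab[unfolded ad bd bal_mem] obtain g where
      m: "h \<in> hom C d x" "(r1, r2) \<in> PO C d c1 c2" "h' \<in> hom C d x" "(r1', r2') \<in> PO C d c1 c2"
      and g: "g \<in> Aut C d" "h = cmp C h' g" "r1' = cmp C g r1" "r2' = cmp C g r2" by blast
    from bc[unfolded bd cd bal_mem] obtain k where
      m2: "h'' \<in> hom C d x" "(r1'', r2'') \<in> PO C d c1 c2"
      and k: "k \<in> Aut C d" "h' = cmp C h'' k" "r1'' = cmp C k r1'" "r2'' = cmp C k r2'" by blast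
    have r: "r1 \<in> hom C c1 d" "r2 \<in> hom C c2 d" using m(2) unfolding PO_iff by blast+
    note G = aut_hom[OF g(1)] aut_hom[OF k(1)]
    have e1: "h = cmp C h'' (cmp C k g)" using g(2) k(2) assoc[OF G(1) G(2) m2(1)] by simp
    have e2: "r1'' = cmp C (cmp C k g) r1" using g(3) k(3) assoc[OF r(1) G(1) G(2)] by simp
    have e3: "r2'' = cmp C (cmp C k g) r2" using g(4) k(4) assoc[OF r(2) G(1) G(2)] by simp
    have "((h, (r1, r2)), (h'', (r1'', r2''))) \<in> bal_rel C d x c1 c2"
      unfolding bal_mem using m m2 aut_comp[OF k(1) g(1)] e1 e2 e3 by blast
    thus "(a, c) \<in> bal_rel C d x c1 c2" using ad cd by simp
  qed
qed

lemma exist: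
  assumes rep: "rep_system C R" and a: "a1 \<in> hom C c1 x" "a2 \<in> hom C c2 x"
  shows "\<exists>d h r1 r2. d \<in> R \<and> h \<in> hom C d x \<and> (r1, r2) \<in> PO C d c1 c2 \<and>
            cmp C h r1 = a1 \<and> cmp C h r2 = a2"
proof -
  obtain p f1 f2 where pb: "is_pullback C p c1 c2 x f1 f2 a1 a2" using pb_exists a by blast
  note mp = pbD[OF pb]
  obtain d0 g1 g2 where wpo: "is_weak_pushout C p c1 c2 d0 f1 f2 g1 g2"
    using wpo_exists[OF mp(5) mp(6)] by blast
  note mg = pbD[OF wpoD(1)[OF wpo]]
  obtain h0 where h0: "h0 \<in> hom C d0 x" "cmp C h0 g1 = a1" "cmp C h0 g2 = a2"
    using wpoD(2)[OF wpo mp(4) a pb] by blast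
  obtain d where d: "d \<in> R" "iso_objs C d0 d" using rep mg(4) unfolding rep_system_def by blast
  obtain \<phi> where "is_iso C d0 d \<phi>" using d(2) unfolding iso_objs_def by blast
  then obtain \<psi> where ph: "\<phi> \<in> hom C d0 d" "\<psi> \<in> hom C d d0" "cmp C \<psi> \<phi> = idm C d0" "cmp C \<phi> \<psi> = idm C d"
    by (rule isoE)
  have w: "is_weak_pushout C p c1 c2 d f1 f2 (cmp C \<phi> g1) (cmp C \<phi> g2)"
    using wpo_post[OF wpo ph] .
  have PO: "(cmp C \<phi> g1, cmp C \<phi> g2) \<in> PO C d c1 c2"
    unfolding PO_iff using w comp_in[OF mg(7) ph(1)] comp_in[OF mg(8) ph(1)] by blast
  have hh: "cmp C h0 \<psi> \<in> hom C d x" using comp_in[OF ph(2) h0(1)] .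
  have e1: "cmp C (cmp C h0 \<psi>) (cmp C \<phi> g1) = a1"
    using assoc[OF comp_in[OF mg(7) ph(1)] ph(2) h0(1)] assoc[OF mg(7) ph(1) ph(2)] ph(3) idl[OF mg(7)] h0(2)
    by simp
  have e2: "cmp C (cmp C h0 \<psi>) (cmp C \<phi> g2) = a2"
    using assoc[OF comp_in[OF mg(8) ph(1)] ph(2) h0(1)] assoc[OF mg(8) ph(1) ph(2)] ph(3) idl[OF mg(8)] h0(3)
    by simp
  show ?thesis using d(1) hh PO e1 e2 by blast
qed

lemma uniq:
  assumes rep: "rep_system C R" and dR: "d \<in> R" "d' \<in> R"
    and h: "h \<in> hom C d x" and r: "(r1, r2) \<in> PO C d c1 c2"
    and h': "h' \<in> hom C d' x" and r': "(r1', r2') \<in> PO C d' c1 c2"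
    and e: "cmp C h r1 = cmp C h' r1'" "cmp C h r2 = cmp C h' r2'"
  shows "d = d' \<and> (\<exists>g\<in>Aut C d. h = cmp C h' g \<and> r1' = cmp C g r1 \<and> r2' = cmp C g r2)"
proof -
  from r obtain p f1 f2 where rh: "r1 \<in> hom C c1 d" "r2 \<in> hom C c2 d"
    and wpo: "is_weak_pushout C p c1 c2 d f1 f2 r1 r2" unfolding PO_iff by blast
  from r' obtain p' f1' f2' where rh': "r1' \<in> hom C c1 d'" "r2' \<in> hom C c2 d'"
    and wpo': "is_weak_pushout C p' c1 c2 d' f1' f2' r1' r2'" unfolding PO_iff by blast
  note pb = wpoD(1)[OF wpo] and pb' = wpoD(1)[OF wpo']
  note m = pbD[OF pb] and m' = pbD[OF pb']
  have x: "x \<in> obj C" using h hom_objs by blast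
  have pbA: "is_pullback C p c1 c2 x f1 f2 (cmp C h r1) (cmp C h r2)" using pb_post[OF pb h] .
  have pbA': "is_pullback C p' c1 c2 x f1' f2' (cmp C h r1) (cmp C h r2)"
    using pb_post[OF pb' h'] e by simp
  have pbB: "is_pullback C p c1 c2 x f1 f2 (cmp C h' r1') (cmp C h' r2')" using pbA e by simp
  have comm: "cmp C r1 f1' = cmp C r2 f2'"
  proof (rule mono[OF h comp_in[OF m'(5) rh(1)] comp_in[OF m'(6) rh(2)]])
    have "cmp C h (cmp C r1 f1') = cmp C h' (cmp C r1' f1')"
      using assoc[OF m'(5) rh(1) h] assoc[OF m'(5) rh'(1) h'] e by simp
    also have "\<dots> = cmp C h' (cmp C r2' f2')" using m'(9) by simp
    also have "\<dots> = cmp C h (cmp C r2 f2')"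
      using assoc[OF m'(6) rh(2) h] assoc[OF m'(6) rh'(2) h'] e by simp
    finally show "cmp C h (cmp C r1 f1') = cmp C h (cmp C r2 f2')" .
  qed
  have comm': "cmp C r1' f1 = cmp C r2' f2"
  proof (rule mono[OF h' comp_in[OF m(5) rh'(1)] comp_in[OF m(6) rh'(2)]])
    have "cmp C h' (cmp C r1' f1) = cmp C h (cmp C r1 f1)"
      using assoc[OF m(5) rh(1) h] assoc[OF m(5) rh'(1) h'] e by simp
    also have "\<dots> = cmp C h (cmp C r2 f2)" using m(9) by simp
    also have "\<dots> = cmp C h' (cmp C r2' f2)"
      using assoc[OF m(6) rh(2) h] assoc[OF m(6) rh'(2) h'] e by simp
    finally show "cmp C h' (cmp C r1' f1) = cmp C h' (cmp C r2' f2)" .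
  qed
  have pb'r: "is_pullback C p' c1 c2 d f1' f2' r1 r2"
    using pb_cancel[OF pbA' h rh refl refl comm] .
  have pbr': "is_pullback C p c1 c2 d' f1 f2 r1' r2'"
    using pb_cancel[OF pbB h' rh' refl refl comm'] .
  obtain u where u: "u \<in> hom C d' d" "cmp C u r1' = r1" "cmp C u r2' = r2"
    using wpoD(2)[OF wpo' m(4) rh pb'r] by blast
  obtain v where v: "v \<in> hom C d d'" "cmp C v r1 = r1'" "cmp C v r2 = r2'"
    using wpoD(2)[OF wpo m'(4) rh' pbr'] by blast
  have U: "\<exists>!k. k \<in> hom C d d \<and> cmp C k r1 = r1 \<and> cmp C k r2 = r2"
    using wpoD(2)[OF wpo m(4) rh pb] .
  have U': "\<exists>!k. k \<in> hom C d' d' \<and> cmp C k r1' = r1' \<and> cmp C k r2' = r2'"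
    using wpoD(2)[OF wpo' m'(4) rh' pb'] .
  have uv: "cmp C u v = idm C d"
  proof -
    have "cmp C (cmp C u v) r1 = r1" using assoc[OF rh(1) v(1) u(1)] v(2) u(2) by simp
    moreover have "cmp C (cmp C u v) r2 = r2" using assoc[OF rh(2) v(1) u(1)] v(3) u(3) by simp
    ultimately show ?thesis using U comp_in[OF v(1) u(1)] id_in[OF m(4)] idl[OF rh(1)] idl[OF rh(2)]
      by blast
  qed
  have vu: "cmp C v u = idm C d'"
  proof -
    have "cmp C (cmp C v u) r1' = r1'" using assoc[OF rh'(1) u(1) v(1)] v(2) u(2) by simp
    moreover have "cmp C (cmp C v u) r2' = r2'" using assoc[OF rh'(2) u(1) v(1)] v(3) u(3) by simp
    ultimately show ?thesis using U' comp_in[OF u(1) v(1)] id_in[OF m'(4)] idl[OF rh'(1)] idl[OF rh'(2)]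
      by blast
  qed
  have "is_iso C d d' v" unfolding is_iso_def using v(1) u(1) uv vu by blast
  hence dd: "d = d'" using rep dR unfolding rep_system_def iso_objs_def by blast
  have gA: "v \<in> Aut C d" unfolding Aut_def is_iso_def using v(1) u(1) uv vu dd by blast
  have UX: "\<exists>!k. k \<in> hom C d x \<and> cmp C k r1 = cmp C h r1 \<and> cmp C k r2 = cmp C h r2"
    using wpoD(2)[OF wpo x comp_in[OF rh(1) h] comp_in[OF rh(2) h] pbA] .
  have hv: "cmp C h' v \<in> hom C d x" using comp_in[OF v(1) h'] .
  have "cmp C (cmp C h' v) r1 = cmp C h r1" using assoc[OF rh(1) v(1) h'] v(2) e by simp
  moreover have "cmp C (cmp C h' v) r2 = cmp C h r2" using assoc[OF rh(2) v(1) h'] v(3) e by simp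
  ultimately have "h = cmp C h' v" using UX hv h by blast
  thus ?thesis using dd gA v by blast
qed

end

locale fi2 = fi +
  fixes R :: "'o set" and c1 c2 :: 'o
  assumes rep: "rep_system C R" and c1: "c1 \<in> obj C" and c2: "c2 \<in> obj C"
begin

definition valid where
  "valid x a1 a2 t \<longleftrightarrow> (case t of (d, h, r1, r2) \<Rightarrow> d \<in> R \<and> h \<in> hom C d x \<and>
      (r1, r2) \<in> PO C d c1 c2 \<and> cmp C h r1 = a1 \<and> cmp C h r2 = a2)"

definition Phi where
  "Phi x a = (case (SOME t. valid x (fst a) (snd a) t) of (d, h, r1, r2) \<Rightarrow>
      (d, bal_class C d x c1 c2 (h, (r1, r2))))"

lemma RobjD: "d \<in> R \<Longrightarrow> d \<in> obj C" using rep unfolding rep_system_def by blast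

lemma Phi_key:
  assumes v: "valid x a1 a2 (d, h, r1, r2)"
  shows "Phi x (a1, a2) = (d, bal_class C d x c1 c2 (h, (r1, r2)))"
proof -
  have "valid x a1 a2 (SOME t. valid x a1 a2 t)" by (rule someI) (rule v)
  moreover obtain d0 h0 r10 r20 where t: "(SOME t. valid x a1 a2 t) = (d0, h0, r10, r20)"
    by (cases "SOME t. valid x a1 a2 t") auto
  ultimately have v0: "valid x a1 a2 (d0, h0, r10, r20)" by simp
  have P: "Phi x (a1, a2) = (d0, bal_class C d0 x c1 c2 (h0, (r10, r20)))"
    unfolding Phi_def using t by simp
  from v have m: "d \<in> R" "h \<in> hom C d x" "(r1, r2) \<in> PO C d c1 c2" "cmp C h r1 = a1" "cmp C h r2 = a2"
    unfolding valid_def by auto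
  from v0 have m0: "d0 \<in> R" "h0 \<in> hom C d0 x" "(r10, r20) \<in> PO C d0 c1 c2" "cmp C h0 r10 = a1" "cmp C h0 r20 = a2"
    unfolding valid_def by auto
  have u: "d = d0 \<and> (\<exists>g\<in>Aut C d. h = cmp C h0 g \<and> r10 = cmp C g r1 \<and> r20 = cmp C g r2)"
  proof -
    have e1: "cmp C h r1 = cmp C h0 r10" and e2: "cmp C h r2 = cmp C h0 r20" using m m0 by simp_all
    show ?thesis using uniq[OF rep m(1) m0(1) m(2) m(3) m0(2) m0(3) e1 e2] .
  qed
  from u have dd: "d = d0" by blast
  from u obtain g where g: "g \<in> Aut C d" "h = cmp C h0 g" "r10 = cmp C g r1" "r20 = cmp C g r2" by blast
  have rel: "((h, (r1, r2)), (h0, (r10, r20))) \<in> bal_rel C d x c1 c2"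
    unfolding bal_mem using m m0[folded dd] g by blast
  have "bal_class C d x c1 c2 (h, (r1, r2)) = bal_class C d x c1 c2 (h0, (r10, r20))"
    using rel equiv_class_eq_iff[OF bal_equiv[OF RobjD[OF m(1)], of x c1 c2]]
    unfolding bal_class_def by blast
  thus ?thesis using P u by simp
qed

lemma Phi_in:
  assumes a: "a1 \<in> hom C c1 x" "a2 \<in> hom C c2 x"
  shows "\<exists>d h r1 r2. valid x a1 a2 (d, h, r1, r2) \<and> Phi x (a1, a2) = (d, bal_class C d x c1 c2 (h, (r1, r2)))
     \<and> Phi x (a1, a2) \<in> coprod_PO C R c1 c2 x"
proof -
  obtain d h r1 r2 where m: "d \<in> R" "h \<in> hom C d x" "(r1, r2) \<in> PO C d c1 c2" "cmp C h r1 = a1" "cmp C h r2 = a2"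
    using exist[OF rep a] by blast
  have v: "valid x a1 a2 (d, h, r1, r2)" unfolding valid_def using m by simp
  have "bal_class C d x c1 c2 (h, (r1, r2)) \<in> balanced_prod C d x c1 c2"
    unfolding bal_class_def balanced_prod_def using m by (intro quotientI) simp
  hence "Phi x (a1, a2) \<in> coprod_PO C R c1 c2 x"
    using Phi_key[OF v] m(1) unfolding coprod_PO_def by simp
  thus ?thesis using Phi_key[OF v] v by blast
qed

lemma class_rel:
  assumes "Phi x a = (d, bal_class C d x c1 c2 (h, (r1, r2)))" and a: "a \<in> hom C c1 x \<times> hom C c2 x"
  shows "d \<in> R \<and> h \<in> hom C d x \<and> (r1, r2) \<in> PO C d c1 c2 \<and> cmp C h r1 = fst a \<and> cmp C h r2 = snd a"
proof -
  obtain a1 a2 where ad: "a = (a1, a2)" by (cases a)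
  have aa: "a1 \<in> hom C c1 x" "a2 \<in> hom C c2 x" using a ad by auto
  obtain d0 h0 r10 r20 where v: "valid x a1 a2 (d0, h0, r10, r20)"
    and P: "Phi x (a1, a2) = (d0, bal_class C d0 x c1 c2 (h0, (r10, r20)))"
    using Phi_in[OF aa] by blast
  from v have m0: "d0 \<in> R" "h0 \<in> hom C d0 x" "(r10, r20) \<in> PO C d0 c1 c2" "cmp C h0 r10 = a1" "cmp C h0 r20 = a2"
    unfolding valid_def by auto
  have dd: "d = d0" and cl: "bal_class C d x c1 c2 (h, (r1, r2)) = bal_class C d x c1 c2 (h0, (r10, r20))"
    using assms(1) P ad by auto
  have eq: "equiv (hom C d x \<times> PO C d c1 c2) (bal_rel C d x c1 c2)"
    using bal_equiv RobjD m0(1) dd by blast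
  have "(h0, (r10, r20)) \<in> bal_class C d x c1 c2 (h0, (r10, r20))"
    unfolding bal_class_def using equiv_class_self[OF eq] m0 dd by simp
  hence "(h0, (r10, r20)) \<in> bal_class C d x c1 c2 (h, (r1, r2))" using cl by simp
  hence rel: "((h, (r1, r2)), (h0, (r10, r20))) \<in> bal_rel C d x c1 c2"
    unfolding bal_class_def by simp
  have "h \<in> hom C d x \<and> (r1, r2) \<in> PO C d c1 c2" using rel unfolding bal_mem by blast
  thus ?thesis using bal_comp[OF rel] m0 dd ad by simp
qed

lemma bij: "x \<in> obj C \<Longrightarrow> bij_betw (Phi x) (hom C c1 x \<times> hom C c2 x) (coprod_PO C R c1 c2 x)"
proof -
  assume x: "x \<in> obj C"
  have inj: "inj_on (Phi x) (hom C c1 x \<times> hom C c2 x)"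
  proof (rule inj_onI)
    fix a b assume a: "a \<in> hom C c1 x \<times> hom C c2 x" and b: "b \<in> hom C c1 x \<times> hom C c2 x"
      and e: "Phi x a = Phi x b"
    obtain a1 a2 where ad: "a = (a1, a2)" by (cases a)
    obtain d h r1 r2 where P: "Phi x a = (d, bal_class C d x c1 c2 (h, (r1, r2)))"
      using Phi_in[of a1 x a2] a ad by auto
    have A: "cmp C h r1 = fst a \<and> cmp C h r2 = snd a" using class_rel[OF P a] by blast
    have B: "cmp C h r1 = fst b \<and> cmp C h r2 = snd b" using class_rel[OF P[unfolded e] b] by blast
    show "a = b" using A B by (simp add: prod_eq_iff)
  qed
  have sub: "Phi x ` (hom C c1 x \<times> hom C c2 x) \<subseteq> coprod_PO C R c1 c2 x"
  proof (rule image_subsetI)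
    fix a assume a: "a \<in> hom C c1 x \<times> hom C c2 x"
    obtain a1 a2 where ad: "a = (a1, a2)" by (cases a)
    show "Phi x a \<in> coprod_PO C R c1 c2 x" using Phi_in[of a1 x a2] a ad by auto
  qed
  have sup: "coprod_PO C R c1 c2 x \<subseteq> Phi x ` (hom C c1 x \<times> hom C c2 x)"
  proof
    fix y assume y: "y \<in> coprod_PO C R c1 c2 x"
    obtain d X where yd: "y = (d, X)" and d: "d \<in> R" and X: "X \<in> balanced_prod C d x c1 c2"
      using y unfolding coprod_PO_def by blast
    obtain t where t: "X = bal_rel C d x c1 c2 `` {t}" "t \<in> hom C d x \<times> PO C d c1 c2"
      using X unfolding balanced_prod_def by (blast elim: quotientE)
    obtain h r1 r2 where td: "t = (h, (r1, r2))" by (cases t) auto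
    have m: "h \<in> hom C d x" "(r1, r2) \<in> PO C d c1 c2" using t td by auto
    have r: "r1 \<in> hom C c1 d" "r2 \<in> hom C c2 d" using m(2) unfolding PO_iff by blast+
    have v: "valid x (cmp C h r1) (cmp C h r2) (d, h, r1, r2)" unfolding valid_def using d m by simp
    have "Phi x (cmp C h r1, cmp C h r2) = y"
      using Phi_key[OF v] yd t td unfolding bal_class_def by simp
    moreover have "(cmp C h r1, cmp C h r2) \<in> hom C c1 x \<times> hom C c2 x"
      using comp_in[OF r(1) m(1)] comp_in[OF r(2) m(1)] by simp
    ultimately show "y \<in> Phi x ` (hom C c1 x \<times> hom C c2 x)" by (metis image_eqI)
  qed
  show ?thesis unfolding bij_betw_def using inj sub sup by blast
qed

lemma nat1:
  assumes y: "y \<in> obj C" and f: "f \<in> hom C x y" and a: "a1 \<in> hom C c1 x" "a2 \<in> hom C c2 x"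
    and P: "Phi x (a1, a2) = (d, bal_class C d x c1 c2 (h, (r1, r2)))"
  shows "Phi y (cmp C f a1, cmp C f a2) = (d, bal_class C d y c1 c2 (cmp C f h, (r1, r2)))"
proof -
  have m: "d \<in> R \<and> h \<in> hom C d x \<and> (r1, r2) \<in> PO C d c1 c2 \<and> cmp C h r1 = a1 \<and> cmp C h r2 = a2"
    using class_rel[OF P] a by simp
  have r: "r1 \<in> hom C c1 d" "r2 \<in> hom C c2 d" using m unfolding PO_iff by blast+
  have v: "valid y (cmp C f a1) (cmp C f a2) (d, cmp C f h, r1, r2)"
    unfolding valid_def using m comp_in[of h d x f y] f assoc[OF r(1) _ f, of h] assoc[OF r(2) _ f, of h]
    by auto
  show ?thesis using Phi_key[OF v] .
qed

lemma nat2: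
  assumes a: "a1 \<in> hom C c1 x" "a2 \<in> hom C c2 x" and s: "s1 \<in> Aut C c1" "s2 \<in> Aut C c2"
    and P: "Phi x (a1, a2) = (d, bal_class C d x c1 c2 (h, (r1, r2)))"
  shows "Phi x (cmp C a1 s1, cmp C a2 s2) = (d, bal_class C d x c1 c2 (h, (cmp C r1 s1, cmp C r2 s2)))"
proof -
  have m: "d \<in> R \<and> h \<in> hom C d x \<and> (r1, r2) \<in> PO C d c1 c2 \<and> cmp C h r1 = a1 \<and> cmp C h r2 = a2"
    using class_rel[OF P] a by simp
  from m obtain p f1 f2 where r: "r1 \<in> hom C c1 d" "r2 \<in> hom C c2 d"
    and wpo: "is_weak_pushout C p c1 c2 d f1 f2 r1 r2" unfolding PO_iff by blast
  obtain t1 where t1: "t1 \<in> Aut C c1" "cmp C t1 s1 = idm C c1" "cmp C s1 t1 = idm C c1"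
    using aut_inv[OF s(1)] by blast
  obtain t2 where t2: "t2 \<in> Aut C c2" "cmp C t2 s2 = idm C c2" "cmp C s2 t2 = idm C c2"
    using aut_inv[OF s(2)] by blast
  have w: "is_weak_pushout C p c1 c2 d (cmp C t1 f1) (cmp C t2 f2) (cmp C r1 s1) (cmp C r2 s2)"
    using wpo_pre[OF wpo aut_hom[OF s(1)] aut_hom[OF t1(1)] t1(2,3) aut_hom[OF s(2)] aut_hom[OF t2(1)] t2(2,3)] .
  have PO: "(cmp C r1 s1, cmp C r2 s2) \<in> PO C d c1 c2"
    unfolding PO_iff using w comp_in[OF aut_hom[OF s(1)] r(1)] comp_in[OF aut_hom[OF s(2)] r(2)] by blast
  have v: "valid x (cmp C a1 s1) (cmp C a2 s2) (d, h, cmp C r1 s1, cmp C r2 s2)"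
    unfolding valid_def using m PO assoc[OF aut_hom[OF s(1)] r(1), of h x] assoc[OF aut_hom[OF s(2)] r(2), of h x]
    by auto
  show ?thesis using Phi_key[OF v] .
qed

end

theorem mainTheorem9:
  fixes C :: "('o, 'm) category" and c1 c2 :: 'o and R :: "'o set"
  assumes "FI_type C" and "c1 \<in> obj C" and "c2 \<in> obj C" and "rep_system C R"
  shows "\<exists>\<Phi> :: 'o \<Rightarrow> 'm \<times> 'm \<Rightarrow> 'o \<times> ('m \<times> ('m \<times> 'm)) set.
     (\<forall>x\<in>obj C. bij_betw (\<Phi> x) (hom C c1 x \<times> hom C c2 x) (coprod_PO C R c1 c2 x)) \<and>
     (\<forall>x\<in>obj C. \<forall>y\<in>obj C. \<forall>f\<in>hom C x y. \<forall>a1\<in>hom C c1 x. \<forall>a2\<in>hom C c2 x.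
        \<forall>d h r1 r2. \<Phi> x (a1, a2) = (d, bal_class C d x c1 c2 (h, (r1, r2))) \<longrightarrow>
          \<Phi> y (cmp C f a1, cmp C f a2) = (d, bal_class C d y c1 c2 (cmp C f h, (r1, r2)))) \<and>
     (\<forall>x\<in>obj C. \<forall>a1\<in>hom C c1 x. \<forall>a2\<in>hom C c2 x. \<forall>s1\<in>Aut C c1. \<forall>s2\<in>Aut C c2.
        \<forall>d h r1 r2. \<Phi> x (a1, a2) = (d, bal_class C d x c1 c2 (h, (r1, r2))) \<longrightarrow>
          \<Phi> x (cmp C a1 s1, cmp C a2 s2) =
            (d, bal_class C d x c1 c2 (h, (cmp C r1 s1, cmp C r2 s2))))"
proof -
  interpret fi2 C R c1 c2
    using assms by (unfold_locales) auto
  show ?thesis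
    apply (rule exI[of _ Phi])
    using bij nat1 nat2 by blast
qed

end
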